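(* Let $\mathcal{O}$ be a nonempty set of quantum channels on $n$ qubits closed under composition, $\Psi$ a channel on $n$ qubits with $\gamma(\Psi)<\infty$, and $k\ge0$ an integer. Then for every sample $S=(z_1,\ldots,z_m)$, \[ \bar{R}_S(\mathcal{F}(\mathcal{O}))\le\bar{R}_S(\mathcal{F}(\mathcal{O}^{(k)}_\Psi))\le\gamma^*\bar{R}_S(\mathcal{F}(\mathcal{O})),\qquad \bar{G}_S(\mathcal{F}(\mathcal{O}))\le\bar{G}_S(\mathcal{F}(\mathcal{O}^{(k)}_\Psi))\le\gamma^*\bar{G}_S(\mathcal{F}(\mathcal{O})), \] where $\gamma^*=\min\{(1+2\gamma(\Psi))^k,1+2\gamma_{\max,n}\}$.
   Context: A quantum channel on $n$ qubits is a completely positive trace-preserving linear map on $2^n\times2^n$ complex matrices. For a channel $\Phi$, $f_\Phi(x,y)=\mathrm{Tr}[\Phi(|x\rangle\langle x|)\,|y\rangle\langle y|]$; $\mathcal{F}(\Omega)=\{f_\Phi:\Phi\in\Omega\}$. $\bar{R}_S(\mathcal{G})=\mathbb{E}\sup_{h\in\mathcal{G}}\frac1m|\sum_{i=1}^m\epsilon_i h(z_i)|$ with $\epsilon_i$ i.i.d. uniform on $\{\pm1\}$, and $\bar{G}_S(\mathcal{G})=\mathbb{E}\sup_{h\in\mathcal{G}}\frac1m|\sum_{i=1}^m g_i h(z_i)|$ with $g_i$ i.i.d. $\mathcal{N}(0,1)$. Free robustness w.r.t. $\mathcal{O}$: $\gamma(\Phi)=\inf\{\lambda\ge0:\exists\,\Phi'\in\mathrm{Conv}(\mathcal{O}),\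 (\Phi+\lambda\Phi')/(1+\lambda)\in\mathrm{Conv}(\mathcal{O})\}$; $\gamma_{\max,n}=\sup$ of $\gamma(\Phi)$ over all channels on $n$ qubits (if infinite, $\gamma^*=(1+2\gamma(\Psi))^k$). $\mathcal{O}^{(k)}_\Psi$ is the set of all finite compositions of elements of $\mathcal{O}\cup\{\Psi\}$ in which $\Psi$ appears at most $k$ times. *)

theory Defs
  imports "HOL-Probability.Probability" "Jordan_Normal_Form.Matrix"
begin

text \<open>Matrices on n qubits: complex 2^n x 2^n matrices (JNF type complex mat).  By convention
  a channel sends every matrix outside the carrier to the zero matrix, so that
  channels are determined by their action on 2^n x 2^n matrices.\<close>

type_synonym qmap = "complex mat \<Rightarrow> complex mat"

definition mtrace :: "complex mat \<Rightarrow> complex" where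
  "mtrace A = (\<Sum>i<dim_row A. A $$ (i,i))"

definition psd :: "nat \<Rightarrow> complex mat \<Rightarrow> bool" where
  "psd d A \<longleftrightarrow> A \<in> carrier_mat d d \<and>
     (\<forall>i<d. \<forall>j<d. A $$ (i,j) = cnj (A $$ (j,i))) \<and>
     (\<forall>v :: nat \<Rightarrow> complex.
        Im (\<Sum>i<d. \<Sum>j<d. cnj (v i) * A $$ (i,j) * v j) = 0 \<and>
        Re (\<Sum>i<d. \<Sum>j<d. cnj (v i) * A $$ (i,j) * v j) \<ge> 0)"

text \<open>(id_k \<otimes> Phi) applied to a (k d) x (k d) matrix viewed as a k x k block matrix
  of d x d blocks.\<close>
definition ampl :: "nat \<Rightarrow> nat \<Rightarrow> qmap \<Rightarrow> complex mat \<Rightarrow> complex mat" where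
  "ampl d k \<Phi> X = mat (k*d) (k*d) (\<lambda>(i,j).
      \<Phi> (mat d d (\<lambda>(r,s). X $$ ((i div d)*d + r, (j div d)*d + s))) $$ (i mod d, j mod d))"

definition channel :: "nat \<Rightarrow> qmap \<Rightarrow> bool" where
  "channel n \<Phi> \<longleftrightarrow> (let d = 2^n in
     (\<forall>X \<in> carrier_mat d d. \<Phi> X \<in> carrier_mat d d) \<and>
     (\<forall>X. X \<notin> carrier_mat d d \<longrightarrow> \<Phi> X = 0\<^sub>m d d) \<and>
     (\<forall>X \<in> carrier_mat d d. \<forall>Y \<in> carrier_mat d d. \<forall>c::complex.
        \<Phi> (c \<cdot>\<^sub>m X + Y) = c \<cdot>\<^sub>m \<Phi> X + \<Phi> Y) \<and>
     (\<forall>X \<in> carrier_mat d d. mtrace (\<Phi> X) = mtrace X) \<and>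
     (\<forall>k X. psd (k*d) X \<longrightarrow> psd (k*d) (ampl d k \<Phi> X)))"

definition proj :: "nat \<Rightarrow> nat \<Rightarrow> complex mat" where
  "proj n x = mat (2^n) (2^n) (\<lambda>(i,j). if i = x \<and> j = x then 1 else 0)"

definition fPhi :: "nat \<Rightarrow> qmap \<Rightarrow> nat \<times> nat \<Rightarrow> real" where
  "fPhi n \<Phi> = (\<lambda>(x,y). Re (mtrace (\<Phi> (proj n x) * proj n y)))"

definition Fset :: "nat \<Rightarrow> qmap set \<Rightarrow> (nat \<times> nat \<Rightarrow> real) set" where
  "Fset n \<Omega> = fPhi n ` \<Omega>"

definition signs :: "nat \<Rightarrow> (nat \<Rightarrow> real) set" where
  "signs m = {e. (\<forall>i<m. e i \<in> {-1, 1}) \<and> (\<forall>i\<ge>m. e i = 0)}"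

definition rademacher :: "nat \<Rightarrow> (nat \<Rightarrow> 'z) \<Rightarrow> ('z \<Rightarrow> real) set \<Rightarrow> real" where
  "rademacher m z G = (\<Sum>e\<in>signs m. (SUP h\<in>G. \<bar>\<Sum>i<m. e i * h (z i)\<bar> / real m)) / 2 ^ m"

definition gaussian :: "nat \<Rightarrow> (nat \<Rightarrow> 'z) \<Rightarrow> ('z \<Rightarrow> real) set \<Rightarrow> real" where
  "gaussian m z G = (\<integral>g. (SUP h\<in>G. \<bar>\<Sum>i<m. g i * h (z i)\<bar> / real m)
      \<partial>(PiM {..<m} (\<lambda>_. density lborel std_normal_density)))"

definition in_conv :: "nat \<Rightarrow> qmap set \<Rightarrow> qmap \<Rightarrow> bool" where
  "in_conv n Ob \<Phi> \<longleftrightarrow> (\<exists>(I::nat set) c \<Phi>s. finite I \<and> (\<forall>i\<in>I. c i \<ge> (0::real) \<and> \<Phi>s i \<in> Ob) \<and>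
      sum c I = 1 \<and>
      (\<forall>X \<in> carrier_mat (2^n) (2^n).
         \<Phi> X \<in> carrier_mat (2^n) (2^n) \<and>
         (\<forall>a<2^n. \<forall>b<2^n. \<Phi> X $$ (a,b) = (\<Sum>i\<in>I. complex_of_real (c i) * \<Phi>s i X $$ (a,b)))))"

definition robustness :: "nat \<Rightarrow> qmap set \<Rightarrow> qmap \<Rightarrow> ereal" where
  "robustness n Ob \<Phi> = Inf (ereal ` {l. l \<ge> 0 \<and> (\<exists>\<Phi>'. in_conv n Ob \<Phi>' \<and>
      in_conv n Ob (\<lambda>X. complex_of_real (1 / (1 + l)) \<cdot>\<^sub>m
                         (\<Phi> X + complex_of_real l \<cdot>\<^sub>m \<Phi>' X)))})"

definition robustness_max :: "nat \<Rightarrow> qmap set \<Rightarrow> ereal" where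
  "robustness_max n Ob = (SUP \<Phi>\<in>{\<Phi>. channel n \<Phi>}. robustness n Ob \<Phi>)"

text \<open>Ob^(k)_Psi: finite nonempty compositions of elements of Ob and Psi, Psi used at most k
  times (None marks an occurrence of Psi).\<close>
definition compose_seq :: "qmap \<Rightarrow> qmap option list \<Rightarrow> qmap" where
  "compose_seq \<Psi> xs = foldr (\<lambda>a f. (case a of None \<Rightarrow> \<Psi> | Some \<Phi> \<Rightarrow> \<Phi>) \<circ> f) xs id"

definition Ok :: "qmap set \<Rightarrow> qmap \<Rightarrow> nat \<Rightarrow> qmap set" where
  "Ok Ob \<Psi> k = {compose_seq \<Psi> xs | xs. xs \<noteq> [] \<and> (\<forall>a\<in>set xs. a = None \<or> the a \<in> Ob) \<and>
      length (filter (\<lambda>a. a = None) xs) \<le> k}"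

definition gamma_star :: "nat \<Rightarrow> qmap set \<Rightarrow> qmap \<Rightarrow> nat \<Rightarrow> ereal" where
  "gamma_star n Ob \<Psi> k = min ((1 + 2 * robustness n Ob \<Psi>) ^ k) (1 + 2 * robustness_max n Ob)"

end

theory Submission
  imports Defs
begin

definition lc :: "nat \<Rightarrow> (real \<times> qmap) list \<Rightarrow> complex mat \<Rightarrow> complex mat" where
  "lc d L X = foldr (\<lambda>(c,B) M. complex_of_real c \<cdot>\<^sub>m B X + M) L (0\<^sub>m d d)"

definition wt :: "(real \<times> qmap) list \<Rightarrow> real" where
  "wt L = sum_list (map (\<lambda>(c,B). \<bar>c\<bar>) L)"

definition MC :: "nat \<Rightarrow> (real \<times> qmap) list \<Rightarrow> bool" where
  "MC d L \<longleftrightarrow> (\<forall>p\<in>set L. \<forall>X\<in>carrier_mat d d. snd p X \<in> carrier_mat d d)"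

lemma lc_Nil[simp]: "lc d [] X = 0\<^sub>m d d" by (simp add: lc_def)
lemma lc_Cons[simp]: "lc d ((c,B)#L) X = complex_of_real c \<cdot>\<^sub>m B X + lc d L X"
  by (simp add: lc_def)
lemma wt_Nil[simp]: "wt [] = 0" by (simp add: wt_def)
lemma wt_Cons[simp]: "wt ((c,B)#L) = \<bar>c\<bar> + wt L" by (simp add: wt_def)
lemma wt_append[simp]: "wt (L1 @ L2) = wt L1 + wt L2" by (simp add: wt_def)
lemma wt_nonneg: "wt L \<ge> 0" unfolding wt_def by (induction L) auto
lemma MC_Nil[simp]: "MC d []" by (simp add: MC_def)
lemma MC_Cons[simp]: "MC d ((c,B)#L) \<longleftrightarrow> (\<forall>X\<in>carrier_mat d d. B X \<in> carrier_mat d d) \<and> MC d L"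
  by (auto simp add: MC_def)
lemma MC_append[simp]: "MC d (L1 @ L2) \<longleftrightarrow> MC d L1 \<and> MC d L2"
  by (auto simp add: MC_def)

lemma lc_carrier: "MC d L \<Longrightarrow> X \<in> carrier_mat d d \<Longrightarrow> lc d L X \<in> carrier_mat d d"
  by (induction L) auto

lemma lc_dims[simp]: "MC d L \<Longrightarrow> X \<in> carrier_mat d d \<Longrightarrow> dim_row (lc d L X) = d"
  "MC d L \<Longrightarrow> X \<in> carrier_mat d d \<Longrightarrow> dim_col (lc d L X) = d"
  using lc_carrier by blast+

lemma lc_index: "MC d L \<Longrightarrow> X \<in> carrier_mat d d \<Longrightarrow> a < d \<Longrightarrow> b < d \<Longrightarrow>
   lc d L X $$ (a,b) = sum_list (map (\<lambda>(c,B). complex_of_real c * B X $$ (a,b)) L)"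
proof (induction L)
  case Nil then show ?case by simp
next
  case (Cons p L)
  obtain c B where p: "p = (c,B)" by fastforce
  have "B X \<in> carrier_mat d d" "lc d L X \<in> carrier_mat d d"
    using Cons.prems lc_carrier[of d L X] by (auto simp: p)
  then show ?case using Cons by (auto simp: p)
qed

lemma lc_append: "MC d L1 \<Longrightarrow> MC d L2 \<Longrightarrow> X \<in> carrier_mat d d \<Longrightarrow>
   lc d (L1 @ L2) X = lc d L1 X + lc d L2 X"
  by (rule eq_matI) (auto simp: lc_index lc_carrier)

lemma lc_scale: "MC d L \<Longrightarrow> X \<in> carrier_mat d d \<Longrightarrow>
   lc d (map (\<lambda>(c,B). (a*c, B)) L) X = complex_of_real a \<cdot>\<^sub>m lc d L X"
proof -
  assume a: "MC d L" "X \<in> carrier_mat d d"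
  have m: "MC d (map (\<lambda>(c,B). (a*c, B)) L)" using a by (auto simp: MC_def)
  have s: "sum_list (map (\<lambda>x. complex_of_real a * f x) L) = complex_of_real a * sum_list (map f L)" for f :: "real \<times> qmap \<Rightarrow> complex"
    by (induction L) (auto simp: algebra_simps)
  show ?thesis
    using a m by (intro eq_matI) (auto simp: lc_index lc_carrier o_def case_prod_beta s[symmetric] mult.assoc)
qed

lemma wt_scale: "wt (map (\<lambda>(c,B). (a*c, B)) L) = \<bar>a\<bar> * wt L"
  unfolding wt_def by (induction L) (auto simp: abs_mult algebra_simps)

lemma lc_comp_right: "lc d (map (\<lambda>(c,B). (c, B \<circ> C)) L) X = lc d L (C X)"
  by (induction L) auto

lemma wt_comp: "wt (map (\<lambda>(c,B). (c, f B)) L) = wt L"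
  unfolding wt_def by (induction L) auto

lemma channel_carrier: "channel n \<Phi> \<Longrightarrow> X \<in> carrier_mat (2^n) (2^n) \<Longrightarrow> \<Phi> X \<in> carrier_mat (2^n) (2^n)"
  by (simp add: channel_def Let_def)

lemma channel_out: "channel n \<Phi> \<Longrightarrow> X \<notin> carrier_mat (2^n) (2^n) \<Longrightarrow> \<Phi> X = 0\<^sub>m (2^n) (2^n)"
  by (simp add: channel_def Let_def)

lemma channel_lin: "channel n \<Phi> \<Longrightarrow> X \<in> carrier_mat (2^n) (2^n) \<Longrightarrow> Y \<in> carrier_mat (2^n) (2^n) \<Longrightarrow>
   \<Phi> (c \<cdot>\<^sub>m X + Y) = c \<cdot>\<^sub>m \<Phi> X + \<Phi> Y"
  by (simp add: channel_def Let_def)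

lemma channel_trace: "channel n \<Phi> \<Longrightarrow> X \<in> carrier_mat (2^n) (2^n) \<Longrightarrow> mtrace (\<Phi> X) = mtrace X"
  by (simp add: channel_def Let_def)

lemma channel_cp: "channel n \<Phi> \<Longrightarrow> psd (k*2^n) X \<Longrightarrow> psd (k*2^n) (ampl (2^n) k \<Phi> X)"
  by (simp add: channel_def Let_def)

lemma channel_zero: assumes "channel n \<Phi>" shows "\<Phi> (0\<^sub>m (2^n) (2^n)) = 0\<^sub>m (2^n) (2^n)"
proof -
  let ?Z = "0\<^sub>m (2^n) (2^n) :: complex mat"
  have z: "?Z \<in> carrier_mat (2^n) (2^n)" by simp
  have "(-1::complex) \<cdot>\<^sub>m ?Z + ?Z = ?Z" by (rule eq_matI) auto
  then have "\<Phi> ?Z = (-1) \<cdot>\<^sub>m \<Phi> ?Z + \<Phi> ?Z"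
    using channel_lin[OF assms z z, of "-1"] by simp
  also have "\<dots> = ?Z" using channel_carrier[OF assms z] by (intro eq_matI) auto
  finally show ?thesis .
qed

lemma channel_lc: assumes "channel n g" "MC (2^n) L" "X \<in> carrier_mat (2^n) (2^n)"
  shows "g (lc (2^n) L X) = lc (2^n) (map (\<lambda>(c,B). (c, g \<circ> B)) L) X"
  using assms(2)
proof (induction L)
  case Nil then show ?case using channel_zero[OF assms(1)] by simp
next
  case (Cons p L)
  obtain c B where p: "p = (c,B)" by fastforce
  have "B X \<in> carrier_mat (2^n) (2^n)" "lc (2^n) L X \<in> carrier_mat (2^n) (2^n)" "MC (2^n) L"
    using Cons.prems lc_carrier[of "2^n" L X] assms(3) by (auto simp: p)
  then have "g (lc (2^n) (p#L) X) = complex_of_real c \<cdot>\<^sub>m g (B X) + g (lc (2^n) L X)"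
    using channel_lin[OF assms(1)] by (simp add: p)
  then show ?case using Cons by (simp add: p)
qed

lemma in_conv_lc: assumes "in_conv n Ob \<Phi>" "\<forall>\<Phi>\<in>Ob. channel n \<Phi>"
  shows "\<exists>L. set (map snd L) \<subseteq> Ob \<and> wt L = 1 \<and> MC (2^n) L \<and>
     (\<forall>X\<in>carrier_mat (2^n) (2^n). \<Phi> X = lc (2^n) L X)"
proof -
  obtain I :: "nat set" and c \<Phi>s where I: "finite I" "\<forall>i\<in>I. c i \<ge> (0::real) \<and> \<Phi>s i \<in> Ob" "sum c I = 1"
    "\<forall>X \<in> carrier_mat (2^n) (2^n). \<Phi> X \<in> carrier_mat (2^n) (2^n) \<and>
         (\<forall>a<2^n. \<forall>b<2^n. \<Phi> X $$ (a,b) = (\<Sum>i\<in>I. complex_of_real (c i) * \<Phi>s i X $$ (a,b)))"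
    using assms(1) unfolding in_conv_def by (elim exE conjE) (rule that; assumption)
  define xs where "xs = sorted_list_of_set I"
  have xs: "distinct xs" "set xs = I" using I(1) by (auto simp: xs_def)
  define L where "L = map (\<lambda>i. (c i, \<Phi>s i)) xs"
  have sub: "set (map snd L) \<subseteq> Ob" using I(2) xs by (auto simp: L_def)
  have mc: "MC (2^n) L" unfolding MC_def
  proof (intro ballI)
    fix p X assume p: "p \<in> set L" and X: "(X::complex mat) \<in> carrier_mat (2^n) (2^n)"
    have "snd p \<in> Ob" using sub p by auto
    then show "snd p X \<in> carrier_mat (2^n) (2^n)" using assms(2) channel_carrier X by blast
  qed
  have "wt L = (\<Sum>i\<leftarrow>xs. \<bar>c i\<bar>)" by (simp add: wt_def L_def o_def)
  also have "\<dots> = (\<Sum>i\<in>I. \<bar>c i\<bar>)" using xs by (simp add: sum_list_distinct_conv_sum_set)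
  also have "\<dots> = (\<Sum>i\<in>I. c i)" by (rule sum.cong) (use I(2) in auto)
  also have "\<dots> = 1" using I(3) by simp
  finally have w: "wt L = 1" .
  have "\<Phi> X = lc (2^n) L X" if X: "X \<in> carrier_mat (2^n) (2^n)" for X
  proof (rule eq_matI)
    fix a b assume ab: "a < dim_row (lc (2^n) L X)" "b < dim_col (lc (2^n) L X)"
    then have ab': "a < 2^n" "b < 2^n" using mc X by auto
    have "lc (2^n) L X $$ (a,b) = (\<Sum>i\<leftarrow>xs. complex_of_real (c i) * \<Phi>s i X $$ (a,b))"
      using lc_index[OF mc X ab'] by (simp add: L_def o_def)
    also have "\<dots> = (\<Sum>i\<in>I. complex_of_real (c i) * \<Phi>s i X $$ (a,b))"
      using xs by (simp add: sum_list_distinct_conv_sum_set)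
    also have "\<dots> = \<Phi> X $$ (a,b)" using I(4) X ab' by simp
    finally show "\<Phi> X $$ (a,b) = lc (2^n) L X $$ (a,b)" by simp
  qed (use I(4) X mc in auto)
  then show ?thesis using sub w mc by blast
qed


definition Rep :: "nat \<Rightarrow> qmap set \<Rightarrow> qmap \<Rightarrow> real \<Rightarrow> bool" where
  "Rep n Ob \<Phi> t \<longleftrightarrow> (\<exists>L. set (map snd L) \<subseteq> Ob \<and> MC (2^n) L \<and> wt L \<le> t \<and>
      (\<forall>X\<in>carrier_mat (2^n) (2^n). \<Phi> X = lc (2^n) L X))"

lemma Rep_mono: "Rep n Ob \<Phi> t \<Longrightarrow> t \<le> t' \<Longrightarrow> Rep n Ob \<Phi> t'"
  unfolding Rep_def by force

lemma MC_scale: "MC d L \<Longrightarrow> MC d (map (\<lambda>(c,B). (a*c, B)) L)"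
  by (auto simp: MC_def)

lemma snd_scale: "map snd (map (\<lambda>(c,B). (a*c, B)) L) = map snd L"
  by (induction L) auto

lemma rob_rep:
  assumes Ob: "\<forall>\<Phi>\<in>Ob. channel n \<Phi>" and ch: "channel n \<Phi>" and l: "l \<ge> 0"
    and c1: "in_conv n Ob \<Phi>'"
    and c2: "in_conv n Ob (\<lambda>X. complex_of_real (1 / (1 + l)) \<cdot>\<^sub>m (\<Phi> X + complex_of_real l \<cdot>\<^sub>m \<Phi>' X))"
  shows "Rep n Ob \<Phi> (1 + 2*l)"
proof -
  let ?d = "2^n::nat"
  obtain LA where A: "set (map snd LA) \<subseteq> Ob" "wt LA = 1" "MC ?d LA"
    "\<forall>X\<in>carrier_mat ?d ?d. complex_of_real (1 / (1 + l)) \<cdot>\<^sub>m (\<Phi> X + complex_of_real l \<cdot>\<^sub>m \<Phi>' X) = lc ?d LA X"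
    using in_conv_lc[OF c2 Ob] by (elim exE conjE) (rule that; assumption)
  obtain LB where B: "set (map snd LB) \<subseteq> Ob" "wt LB = 1" "MC ?d LB"
    "\<forall>X\<in>carrier_mat ?d ?d. \<Phi>' X = lc ?d LB X"
    using in_conv_lc[OF c1 Ob] by (elim exE conjE) (rule that; assumption)
  define L where "L = map (\<lambda>(c,B). ((1+l)*c, B)) LA @ map (\<lambda>(c,B). ((-l)*c, B)) LB"
  have sub: "set (map snd L) \<subseteq> Ob" unfolding L_def map_append snd_scale set_append Un_subset_iff using A(1) B(1) by (rule conjI)
  have mc: "MC ?d L" unfolding L_def MC_append using MC_scale[OF A(3)] MC_scale[OF B(3)] by (rule conjI)
  have w: "wt L = 1 + 2*l" unfolding L_def wt_append wt_scale using A(2) B(2) l by simp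
  have "\<Phi> X = lc ?d L X" if X: "X \<in> carrier_mat ?d ?d" for X
  proof -
    have e: "lc ?d L X = complex_of_real (1+l) \<cdot>\<^sub>m lc ?d LA X + complex_of_real (-l) \<cdot>\<^sub>m lc ?d LB X"
      unfolding L_def lc_append[OF MC_scale[OF A(3)] MC_scale[OF B(3)] X] lc_scale[OF A(3) X] lc_scale[OF B(3) X] ..
    have cA: "lc ?d LA X \<in> carrier_mat ?d ?d" and cB: "lc ?d LB X \<in> carrier_mat ?d ?d"
      using lc_carrier A(3) B(3) X by blast+
    have cP: "\<Phi> X \<in> carrier_mat ?d ?d" using channel_carrier[OF ch X] .
    have cP': "\<Phi>' X \<in> carrier_mat ?d ?d" using cB B(4) X by simp
    have la: "lc ?d LA X = complex_of_real (1 / (1 + l)) \<cdot>\<^sub>m (\<Phi> X + complex_of_real l \<cdot>\<^sub>m \<Phi>' X)"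
      using A(4) X by simp
    have lb: "lc ?d LB X = \<Phi>' X" using B(4) X by simp
    show ?thesis unfolding e la lb
    proof (rule eq_matI)
      fix i j assume "i < dim_row (complex_of_real (1+l) \<cdot>\<^sub>m (complex_of_real (1 / (1 + l)) \<cdot>\<^sub>m (\<Phi> X + complex_of_real l \<cdot>\<^sub>m \<Phi>' X)) + complex_of_real (-l) \<cdot>\<^sub>m \<Phi>' X)"
        "j < dim_col (complex_of_real (1+l) \<cdot>\<^sub>m (complex_of_real (1 / (1 + l)) \<cdot>\<^sub>m (\<Phi> X + complex_of_real l \<cdot>\<^sub>m \<Phi>' X)) + complex_of_real (-l) \<cdot>\<^sub>m \<Phi>' X)"
      then have ij: "i < ?d" "j < ?d" using cP' by auto
      have nz: "complex_of_real (1+l) \<noteq> 0" using l by (simp add: complex_eq_iff)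
      have "complex_of_real (1+l) * (complex_of_real (1 / (1 + l)) * (\<Phi> X $$ (i,j) + complex_of_real l * \<Phi>' X $$ (i,j)))
           + complex_of_real (-l) * \<Phi>' X $$ (i,j) = \<Phi> X $$ (i,j)"
        using nz by (simp add: field_simps)
      then show "\<Phi> X $$ (i, j) = (complex_of_real (1+l) \<cdot>\<^sub>m (complex_of_real (1 / (1 + l)) \<cdot>\<^sub>m (\<Phi> X + complex_of_real l \<cdot>\<^sub>m \<Phi>' X)) + complex_of_real (-l) \<cdot>\<^sub>m \<Phi>' X) $$ (i, j)"
        using ij cP cP' by simp
    qed (use cP cP' in simp_all)
  qed
  then show ?thesis unfolding Rep_def using sub mc w by (intro exI[of _ L]) auto
qed


lemma MC_comp: "MC d LP \<Longrightarrow> (\<forall>X\<in>carrier_mat d d. B X \<in> carrier_mat d d) \<Longrightarrow>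
    MC d (map (\<lambda>(a,A). (a, A \<circ> B)) LP)"
  by (auto simp: MC_def)

lemma map_scale_comp: "map (\<lambda>(a,A). (c*a, A \<circ> B)) LP = map (\<lambda>(a,A). (c*a, A)) (map (\<lambda>(a,A). (a, A \<circ> B)) LP)"
  by (induction LP) auto

lemma MC_concat: "MC d L \<Longrightarrow> MC d LP \<Longrightarrow> MC d (concat (map (\<lambda>(c,B). map (\<lambda>(a,A). (c*a, A \<circ> B)) LP) L))"
proof (induction L)
  case Nil then show ?case by simp
next
  case (Cons p L)
  obtain c B where p: "p = (c,B)" by fastforce
  have Bc: "\<forall>X\<in>carrier_mat d d. B X \<in> carrier_mat d d" and mL: "MC d L" using Cons.prems by (auto simp: p)
  have mc1: "MC d (map (\<lambda>(a,A). (a, A \<circ> B)) LP)" using MC_comp[OF Cons.prems(2) Bc] .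
  have mc2: "MC d (map (\<lambda>(a,A). (c*a, A \<circ> B)) LP)"
    unfolding map_scale_comp using MC_scale[OF mc1] .
  show ?case unfolding p list.map prod.case concat.simps MC_append using mc2 Cons.IH[OF mL Cons.prems(2)] by (rule conjI)
qed

lemma Ob_concat:
  assumes cl: "\<forall>\<Phi>\<in>Ob. \<forall>\<Phi>'\<in>Ob. \<Phi> \<circ> \<Phi>' \<in> Ob"
  shows "set (map snd L) \<subseteq> Ob \<Longrightarrow> set (map snd LP) \<subseteq> Ob \<Longrightarrow>
    set (map snd (concat (map (\<lambda>(c,B). map (\<lambda>(a,A). (c*a, A \<circ> B)) LP) L))) \<subseteq> Ob"
proof (induction L)
  case Nil then show ?case by simp
next
  case (Cons p L)
  obtain c B where p: "p = (c,B)" by fastforce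
  have B: "B \<in> Ob" and L: "set (map snd L) \<subseteq> Ob" using Cons.prems by (auto simp: p)
  have "set (map snd (map (\<lambda>(a,A). (c*a, A \<circ> B)) LP)) \<subseteq> Ob"
  proof
    fix x assume "x \<in> set (map snd (map (\<lambda>(a,A). (c*a, A \<circ> B)) LP))"
    then obtain q where q: "q \<in> set LP" "x = snd q \<circ> B" by (auto simp: case_prod_beta)
    have "snd q \<in> Ob" using q(1) Cons.prems(2) by auto
    then show "x \<in> Ob" using cl B q(2) by blast
  qed
  then show ?case unfolding p list.map prod.case concat.simps map_append set_append Un_subset_iff
    using Cons.IH[OF L Cons.prems(2)] by (rule conjI)
qed

lemma lc_subst:
  assumes "MC d L" "MC d LP" "\<forall>Y\<in>carrier_mat d d. \<Psi> Y = lc d LP Y" "X \<in> carrier_mat d d"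
  shows "lc d (map (\<lambda>(c,B). (c, \<Psi> \<circ> B)) L) X =
         lc d (concat (map (\<lambda>(c,B). map (\<lambda>(a,A). (c*a, A \<circ> B)) LP) L)) X"
  using assms(1)
proof (induction L)
  case Nil then show ?case by simp
next
  case (Cons p L)
  obtain c B where p: "p = (c,B)" by fastforce
  have Bc: "\<forall>X\<in>carrier_mat d d. B X \<in> carrier_mat d d" and mL: "MC d L" using Cons.prems by (auto simp: p)
  have BX: "B X \<in> carrier_mat d d" using Bc assms(4) by blast
  have mc1: "MC d (map (\<lambda>(a,A). (a, A \<circ> B)) LP)" using MC_comp[OF assms(2) Bc] .
  have mc2: "MC d (map (\<lambda>(a,A). (c*a, A \<circ> B)) LP)"
    unfolding map_scale_comp using MC_scale[OF mc1] .
  have mc3: "MC d (concat (map (\<lambda>(c,B). map (\<lambda>(a,A). (c*a, A \<circ> B)) LP) L))"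
    using MC_concat[OF mL assms(2)] .
  have "lc d (map (\<lambda>(a,A). (c*a, A \<circ> B)) LP) X = complex_of_real c \<cdot>\<^sub>m lc d (map (\<lambda>(a,A). (a, A \<circ> B)) LP) X"
    unfolding map_scale_comp by (rule lc_scale[OF mc1 assms(4)])
  also have "\<dots> = complex_of_real c \<cdot>\<^sub>m \<Psi> (B X)"
    unfolding lc_comp_right using assms(3) BX by simp
  finally have k: "lc d (map (\<lambda>(a,A). (c*a, A \<circ> B)) LP) X = complex_of_real c \<cdot>\<^sub>m \<Psi> (B X)" .
  show ?case
    unfolding p list.map prod.case concat.simps lc_Cons lc_append[OF mc2 mc3 assms(4)] k Cons.IH[OF mL]
    by (simp only: comp_apply)
qed

lemma wt_subst: "wt (concat (map (\<lambda>(c,B). map (\<lambda>(a,A). (c*a, A \<circ> B)) LP) L)) = wt L * wt LP"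
proof (induction L)
  case Nil then show ?case by simp
next
  case (Cons p L)
  obtain c B where p: "p = (c,B)" by fastforce
  have "wt (map (\<lambda>(a,A). (c*a, A \<circ> B)) LP) = \<bar>c\<bar> * wt LP"
    unfolding map_scale_comp wt_scale wt_comp ..
  then show ?case unfolding p list.map prod.case concat.simps wt_append Cons.IH by (simp add: algebra_simps)
qed

lemma Rep_comp_Ob:
  assumes Ob: "\<forall>\<Phi>\<in>Ob. channel n \<Phi>" and cl: "\<forall>\<Phi>\<in>Ob. \<forall>\<Phi>'\<in>Ob. \<Phi> \<circ> \<Phi>' \<in> Ob"
    and g: "g \<in> Ob" and R: "Rep n Ob R t"
  shows "Rep n Ob (g \<circ> R) t"
proof -
  obtain L where L: "set (map snd L) \<subseteq> Ob" "MC (2^n) L" "wt L \<le> t"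
      "\<forall>X\<in>carrier_mat (2^n) (2^n). R X = lc (2^n) L X"
    using R unfolding Rep_def by (elim exE conjE) (rule that; assumption)
  define L' where "L' = map (\<lambda>(c,B). (c, g \<circ> B)) L"
  have "set (map snd L') \<subseteq> Ob" using L(1) cl g by (auto simp: L'_def)
  moreover have "MC (2^n) L'" using L(2) channel_carrier[OF bspec[OF Ob g]] by (auto simp: L'_def MC_def)
  moreover have "wt L' \<le> t" using L(3) by (simp add: L'_def wt_comp)
  moreover have "\<forall>X\<in>carrier_mat (2^n) (2^n). (g \<circ> R) X = lc (2^n) L' X"
    using L(2,4) channel_lc[OF bspec[OF Ob g]] by (simp add: L'_def)
  ultimately show ?thesis unfolding Rep_def by blast
qed

lemma Rep_comp_Psi:
  assumes Ob: "\<forall>\<Phi>\<in>Ob. channel n \<Phi>" and cl: "\<forall>\<Phi>\<in>Ob. \<forall>\<Phi>'\<in>Ob. \<Phi> \<circ> \<Phi>' \<in> Ob"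
    and ch: "channel n \<Psi>" and P: "Rep n Ob \<Psi> s" and R: "Rep n Ob R t"
  shows "Rep n Ob (\<Psi> \<circ> R) (s * t)"
proof -
  obtain L where L: "set (map snd L) \<subseteq> Ob" "MC (2^n) L" "wt L \<le> t"
      "\<forall>X\<in>carrier_mat (2^n) (2^n). R X = lc (2^n) L X"
    using R unfolding Rep_def by (elim exE conjE) (rule that; assumption)
  obtain LP where LP: "set (map snd LP) \<subseteq> Ob" "MC (2^n) LP" "wt LP \<le> s"
      "\<forall>X\<in>carrier_mat (2^n) (2^n). \<Psi> X = lc (2^n) LP X"
    using P unfolding Rep_def by (elim exE conjE) (rule that; assumption)
  define L' where "L' = concat (map (\<lambda>(c,B). map (\<lambda>(a,A). (c*a, A \<circ> B)) LP) L)"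
  have "set (map snd L') \<subseteq> Ob" unfolding L'_def using Ob_concat[OF cl L(1) LP(1)] .
  moreover have "MC (2^n) L'" unfolding L'_def using MC_concat[OF L(2) LP(2)] .
  moreover have "wt L' \<le> s * t"
  proof -
    have "wt L' = wt L * wt LP" by (simp add: L'_def wt_subst)
    also have "\<dots> \<le> t * s" using L(3) LP(3) wt_nonneg[of L] wt_nonneg[of LP]
      by (intro mult_mono) auto
    finally show ?thesis by (simp add: mult.commute)
  qed
  moreover have "\<forall>X\<in>carrier_mat (2^n) (2^n). (\<Psi> \<circ> R) X = lc (2^n) L' X"
  proof
    fix X :: "complex mat" assume X: "X \<in> carrier_mat (2^n) (2^n)"
    have "(\<Psi> \<circ> R) X = \<Psi> (lc (2^n) L X)" using L(4) X by simp
    also have "\<dots> = lc (2^n) (map (\<lambda>(c,B). (c, \<Psi> \<circ> B)) L) X" using channel_lc[OF ch L(2) X] .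
    also have "\<dots> = lc (2^n) L' X" unfolding L'_def using lc_subst[OF L(2) LP(2) LP(4) X] .
    finally show "(\<Psi> \<circ> R) X = lc (2^n) L' X" .
  qed
  ultimately show ?thesis unfolding Rep_def by blast
qed


lemma compose_seq_Cons: "compose_seq \<Psi> (a#xs) = (case a of None \<Rightarrow> \<Psi> | Some \<Phi> \<Rightarrow> \<Phi>) \<circ> compose_seq \<Psi> xs"
  by (simp add: compose_seq_def)

lemma compose_seq_Nil: "compose_seq \<Psi> [] = id"
  by (simp add: compose_seq_def)

lemma Rep_one: assumes "\<forall>\<Phi>\<in>Ob. channel n \<Phi>" "g \<in> Ob" shows "Rep n Ob g 1"
proof -
  have ch: "channel n g" using assms by blast
  have mc: "MC (2^n) [(1,g)]" using channel_carrier[OF ch] by simp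
  have "g X = lc (2^n) [(1,g)] X" if X: "X \<in> carrier_mat (2^n) (2^n)" for X
    using channel_carrier[OF ch X] by (intro eq_matI) auto
  then show ?thesis unfolding Rep_def using assms(2) mc by (intro exI[of _ "[(1,g)]"]) auto
qed

lemma Rep_seq:
  assumes Ob: "\<forall>\<Phi>\<in>Ob. channel n \<Phi>" and cl: "\<forall>\<Phi>\<in>Ob. \<forall>\<Phi>'\<in>Ob. \<Phi> \<circ> \<Phi>' \<in> Ob"
    and ch: "channel n \<Psi>" and P: "Rep n Ob \<Psi> s"
  shows "xs \<noteq> [] \<Longrightarrow> (\<forall>a\<in>set xs. a = None \<or> the a \<in> Ob) \<Longrightarrow>
    Rep n Ob (compose_seq \<Psi> xs) (s ^ length (filter (\<lambda>a. a = None) xs))"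
proof (induction xs)
  case Nil then show ?case by simp
next
  case (Cons a xs)
  show ?case
  proof (cases "xs = []")
    case True
    show ?thesis
    proof (cases a)
      case None then show ?thesis using P True by (simp add: compose_seq_Cons compose_seq_Nil)
    next
      case (Some \<Phi>)
      then have "\<Phi> \<in> Ob" using Cons.prems by auto
      then show ?thesis using Rep_one[OF Ob] True Some by (simp add: compose_seq_Cons compose_seq_Nil)
    qed
  next
    case False
    have IH: "Rep n Ob (compose_seq \<Psi> xs) (s ^ length (filter (\<lambda>a. a = None) xs))"
      using Cons False by auto
    show ?thesis
    proof (cases a)
      case None
      have len: "length (filter (\<lambda>a. a = None) (None#xs)) = Suc (length (filter (\<lambda>a. a = None) xs))"
        by simp
      show ?thesis unfolding compose_seq_Cons None option.case(1) len power_Suc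
        by (rule Rep_comp_Psi[OF Ob cl ch P IH])
    next
      case (Some \<Phi>)
      then have "\<Phi> \<in> Ob" using Cons.prems by auto
      have len: "length (filter (\<lambda>a. a = None) (Some \<Phi>#xs)) = length (filter (\<lambda>a. a = None) xs)"
        by simp
      show ?thesis unfolding compose_seq_Cons Some option.case(2) len
        by (rule Rep_comp_Ob[OF Ob cl \<open>\<Phi> \<in> Ob\<close> IH])
    qed
  qed
qed

definition blk :: "nat \<Rightarrow> complex mat \<Rightarrow> nat \<Rightarrow> nat \<Rightarrow> complex mat" where
  "blk d X I J = mat d d (\<lambda>(r,s). X $$ (I*d + r, J*d + s))"

lemma ampl_blk: "ampl d k \<Phi> X = mat (k*d) (k*d) (\<lambda>(i,j). \<Phi> (blk d X (i div d) (j div d)) $$ (i mod d, j mod d))"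
  by (simp add: ampl_def blk_def)

lemma idx_bound: "I < k \<Longrightarrow> r < (d::nat) \<Longrightarrow> I*d + r < k*d"
proof -
  assume a: "I < k" "r < d"
  have "(I+1)*d \<le> k*d" using a(1) by (intro mult_le_mono1) simp
  then show ?thesis using a(2) by simp
qed

lemma blk_ampl:
  assumes d: "d > 0" and B: "\<forall>Y\<in>carrier_mat d d. B Y \<in> carrier_mat d d" and IJ: "I < k" "J < k"
  shows "blk d (ampl d k B X) I J = B (blk d X I J)"
proof -
  have c: "B (blk d X I J) \<in> carrier_mat d d" using B by (simp add: blk_def)
  show ?thesis
  proof (rule eq_matI)
    fix r s assume "r < dim_row (B (blk d X I J))" "s < dim_col (B (blk d X I J))"
    then have rs: "r < d" "s < d" using c by auto
    have b: "I*d + r < k*d" "J*d + s < k*d" using idx_bound IJ rs by auto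
    have dv: "(I*d + r) div d = I" "(J*d + s) div d = J" "(I*d + r) mod d = r" "(J*d + s) mod d = s"
      using rs d by auto
    have "blk d (ampl d k B X) I J $$ (r, s) = ampl d k B X $$ (I*d+r, J*d+s)"
      unfolding blk_def using rs by simp
    also have "\<dots> = B (blk d X I J) $$ (r, s)" unfolding ampl_blk using b dv by simp
    finally show "blk d (ampl d k B X) I J $$ (r, s) = B (blk d X I J) $$ (r, s)" .
  qed (use c in \<open>simp_all add: blk_def\<close>)
qed

lemma ampl_comp:
  assumes d: "d > 0" and B: "\<forall>Y\<in>carrier_mat d d. B Y \<in> carrier_mat d d"
  shows "ampl d k (A \<circ> B) X = ampl d k A (ampl d k B X)"
proof -
  have "mat (k*d) (k*d) (\<lambda>(i,j). (A \<circ> B) (blk d X (i div d) (j div d)) $$ (i mod d, j mod d))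
      = mat (k*d) (k*d) (\<lambda>(i,j). A (blk d (ampl d k B X) (i div d) (j div d)) $$ (i mod d, j mod d))"
  proof (rule eq_matI)
    fix i j assume "i < dim_row (mat (k*d) (k*d) (\<lambda>(i,j). A (blk d (ampl d k B X) (i div d) (j div d)) $$ (i mod d, j mod d)))"
      "j < dim_col (mat (k*d) (k*d) (\<lambda>(i,j). A (blk d (ampl d k B X) (i div d) (j div d)) $$ (i mod d, j mod d)))"
    then have ij: "i < k*d" "j < k*d" by auto
    have "i div d < k" "j div d < k" using ij d by (auto simp: div_less_iff_less_mult)
    then show "mat (k*d) (k*d) (\<lambda>(i,j). (A \<circ> B) (blk d X (i div d) (j div d)) $$ (i mod d, j mod d)) $$ (i,j)
      = mat (k*d) (k*d) (\<lambda>(i,j). A (blk d (ampl d k B X) (i div d) (j div d)) $$ (i mod d, j mod d)) $$ (i,j)"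
      using ij blk_ampl[OF d B] by simp
  qed auto
  then show ?thesis unfolding ampl_blk .
qed

lemma channel_comp:
  assumes A: "channel n A" and B: "channel n B"
  shows "channel n (A \<circ> B)"
proof -
  let ?d = "2^n::nat"
  have c1: "\<forall>X \<in> carrier_mat ?d ?d. (A \<circ> B) X \<in> carrier_mat ?d ?d"
    using channel_carrier[OF A] channel_carrier[OF B] by simp
  have c2: "\<forall>X. X \<notin> carrier_mat ?d ?d \<longrightarrow> (A \<circ> B) X = 0\<^sub>m ?d ?d"
    using channel_out[OF B] channel_zero[OF A] by simp
  have c3: "\<forall>X \<in> carrier_mat ?d ?d. \<forall>Y \<in> carrier_mat ?d ?d. \<forall>c::complex.
        (A \<circ> B) (c \<cdot>\<^sub>m X + Y) = c \<cdot>\<^sub>m (A \<circ> B) X + (A \<circ> B) Y"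
    using channel_lin[OF A] channel_lin[OF B] channel_carrier[OF B] by simp
  have c4: "\<forall>X \<in> carrier_mat ?d ?d. mtrace ((A \<circ> B) X) = mtrace X"
    using channel_trace[OF A] channel_trace[OF B] channel_carrier[OF B] by simp
  have c5: "\<forall>k X. psd (k*?d) X \<longrightarrow> psd (k*?d) (ampl ?d k (A \<circ> B) X)"
  proof (intro allI impI)
    fix k X assume X: "psd (k*?d) X"
    have "ampl ?d k (A \<circ> B) X = ampl ?d k A (ampl ?d k B X)"
      by (rule ampl_comp) (use channel_carrier[OF B] in auto)
    then show "psd (k*?d) (ampl ?d k (A \<circ> B) X)"
      using channel_cp[OF A channel_cp[OF B X]] by simp
  qed
  show ?thesis unfolding channel_def Let_def using c1 c2 c3 c4 c5 by blast
qed

lemma channel_seq: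
  assumes Ob: "\<forall>\<Phi>\<in>Ob. channel n \<Phi>" and ch: "channel n \<Psi>"
  shows "xs \<noteq> [] \<Longrightarrow> (\<forall>a\<in>set xs. a = None \<or> the a \<in> Ob) \<Longrightarrow> channel n (compose_seq \<Psi> xs)"
proof (induction xs)
  case Nil then show ?case by simp
next
  case (Cons a xs)
  have g: "channel n (case a of None \<Rightarrow> \<Psi> | Some \<Phi> \<Rightarrow> \<Phi>)"
    using Cons.prems ch Ob by (cases a) auto
  show ?case
  proof (cases "xs = []")
    case True then show ?thesis using g by (simp add: compose_seq_Cons compose_seq_Nil)
  next
    case False
    have "channel n (compose_seq \<Psi> xs)" using Cons.IH False Cons.prems by simp
    then show ?thesis unfolding compose_seq_Cons by (rule channel_comp[OF g])
  qed
qed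


lemma proj_carrier[simp]: "proj n x \<in> carrier_mat (2^n) (2^n)"
  by (simp add: proj_def)

lemma trace_proj: assumes A: "A \<in> carrier_mat (2^n) (2^n)" and y: "y < 2^n"
  shows "mtrace (A * proj n y) = A $$ (y,y)"
proof -
  have e: "(A * proj n y) $$ (i,i) = (if i = y then A $$ (y,y) else 0)" if i: "i < 2^n" for i
  proof -
    have "(A * proj n y) $$ (i,i) = (\<Sum>k<2^n. A $$ (i,k) * (if k = y \<and> i = y then 1 else 0))"
      using A i by (simp add: proj_def scalar_prod_def lessThan_atLeast0)
    also have "\<dots> = (\<Sum>k<2^n. if k = y then (if i = y then A $$ (i,k) else 0) else 0)"
      by (rule sum.cong) auto
    also have "\<dots> = (if i = y then A $$ (y,y) else 0)" using y by simp
    finally show ?thesis .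
  qed
  have "mtrace (A * proj n y) = (\<Sum>i<2^n. (A * proj n y) $$ (i,i))"
    using A by (simp add: mtrace_def)
  also have "\<dots> = (\<Sum>i<2^n. if i = y then A $$ (y,y) else 0)" by (rule sum.cong) (auto simp: e)
  also have "\<dots> = A $$ (y,y)" using y by simp
  finally show ?thesis .
qed

lemma fPhi_eq: "\<Phi> (proj n x) \<in> carrier_mat (2^n) (2^n) \<Longrightarrow> y < 2^n \<Longrightarrow>
    fPhi n \<Phi> (x,y) = Re (\<Phi> (proj n x) $$ (y,y))"
  by (simp add: fPhi_def trace_proj)

lemma Re_sum_list_lc: "Re (sum_list (map (\<lambda>(c,B). complex_of_real c * f B) L)) = sum_list (map (\<lambda>(c,B). c * Re (f B)) L)"
  by (induction L) auto

lemma fPhi_lc: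
  assumes mc: "MC (2^n) L" and eq: "\<forall>X\<in>carrier_mat (2^n) (2^n). C X = lc (2^n) L X"
    and xy: "y < 2^n"
  shows "fPhi n C (x,y) = sum_list (map (\<lambda>(c,B). c * fPhi n B (x,y)) L)"
proof -
  have P: "proj n x \<in> carrier_mat (2^n) (2^n)" by simp
  have cC: "C (proj n x) \<in> carrier_mat (2^n) (2^n)" using eq lc_carrier[OF mc P] by simp
  have "fPhi n C (x,y) = Re (lc (2^n) L (proj n x) $$ (y,y))" using fPhi_eq[where \<Phi>=C and n=n and x=x and y=y, OF cC xy] eq by simp
  also have "\<dots> = sum_list (map (\<lambda>(c,B). c * Re (B (proj n x) $$ (y,y))) L)"
    using lc_index[OF mc P xy xy] Re_sum_list_lc by simp
  also have "\<dots> = sum_list (map (\<lambda>(c,B). c * fPhi n B (x,y)) L)"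
  proof (rule arg_cong[where f=sum_list], rule map_cong[OF refl])
    fix p assume p: "p \<in> set L"
    obtain c B where pe: "p = (c,B)" by fastforce
    have "B (proj n x) \<in> carrier_mat (2^n) (2^n)" using mc p P unfolding MC_def pe by auto
    then show "(\<lambda>(c,B). c * Re (B (proj n x) $$ (y,y))) p = (\<lambda>(c,B). c * fPhi n B (x,y)) p"
      using fPhi_eq xy by (simp add: pe)
  qed
  finally show ?thesis .
qed

lemma qf_delta: assumes y: "y < d"
  shows "(\<Sum>i<d. \<Sum>j<d. cnj ((\<lambda>k. if k = y then 1 else 0) i) * M $$ (i,j) * (\<lambda>k. if k = y then 1 else (0::complex)) j) = M $$ (y,y)"
proof -
  have "(\<Sum>j<d. cnj ((\<lambda>k. if k = y then 1 else 0) i) * M $$ (i,j) * (\<lambda>k. if k = y then 1 else (0::complex)) j)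
      = (if i = y then M $$ (y,y) else 0)" for i
  proof -
    have "(\<Sum>j<d. cnj ((\<lambda>k. if k = y then 1 else 0) i) * M $$ (i,j) * (\<lambda>k. if k = y then 1 else (0::complex)) j)
       = (\<Sum>j<d. if j = y then (if i = y then M $$ (i,y) else 0) else 0)"
      by (rule sum.cong) auto
    then show ?thesis using y by simp
  qed
  then show ?thesis using y by simp
qed

lemma psd_proj: assumes x: "x < 2^n" shows "psd (2^n) (proj n x)"
proof -
  have q: "(\<Sum>i<2^n. \<Sum>j<2^n. cnj (v i) * proj n x $$ (i,j) * v j) = cnj (v x) * v x" for v :: "nat \<Rightarrow> complex"
  proof -
    have "(\<Sum>j<2^n. cnj (v i) * proj n x $$ (i,j) * v j) = (if i = x then cnj (v x) * v x else 0)" if i: "i < 2^n" for i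
    proof -
      have "(\<Sum>j<2^n. cnj (v i) * proj n x $$ (i,j) * v j) = (\<Sum>j<2^n. if j = x then (if i = x then cnj (v x) * v x else 0) else 0)"
        using i by (intro sum.cong) (auto simp: proj_def)
      then show ?thesis using x by simp
    qed
    then have "(\<Sum>i<2^n. \<Sum>j<2^n. cnj (v i) * proj n x $$ (i,j) * v j) = (\<Sum>i<2^n. if i = x then cnj (v x) * v x else 0)"
      by (intro sum.cong) auto
    then show ?thesis using x by simp
  qed
  have z: "Im (cnj z * z) = 0 \<and> Re (cnj z * z) \<ge> 0" for z :: complex
    by (auto simp: algebra_simps)
  have qf: "\<forall>v. Im (\<Sum>i<2^n. \<Sum>j<2^n. cnj (v i) * proj n x $$ (i,j) * v j) = 0 \<and>
       Re (\<Sum>i<2^n. \<Sum>j<2^n. cnj (v i) * proj n x $$ (i,j) * v j) \<ge> 0"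
  proof
    fix v :: "nat \<Rightarrow> complex"
    show "Im (\<Sum>i<2^n. \<Sum>j<2^n. cnj (v i) * proj n x $$ (i,j) * v j) = 0 \<and>
       Re (\<Sum>i<2^n. \<Sum>j<2^n. cnj (v i) * proj n x $$ (i,j) * v j) \<ge> 0"
      unfolding q by (rule z)
  qed
  have herm: "\<forall>i<2^n. \<forall>j<2^n. proj n x $$ (i,j) = cnj (proj n x $$ (j,i))"
  proof (intro allI impI)
    fix i j :: nat assume "i < 2^n" "j < 2^n"
    then show "proj n x $$ (i,j) = cnj (proj n x $$ (j,i))" unfolding proj_def by simp
  qed
  show ?thesis unfolding psd_def by (intro conjI proj_carrier herm qf)
qed

lemma ampl_one: assumes "X \<in> carrier_mat d d" "\<Phi> X \<in> carrier_mat d d"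
  shows "ampl d 1 \<Phi> X = \<Phi> X"
proof -
  have b: "blk d X 0 0 = X" using assms(1) by (intro eq_matI) (auto simp: blk_def)
  show ?thesis unfolding ampl_blk using assms(2) b by (intro eq_matI) auto
qed

lemma channel_fPhi_bound: assumes ch: "channel n \<Phi>" and x: "x < 2^n" and y: "y < 2^n"
  shows "0 \<le> fPhi n \<Phi> (x,y) \<and> fPhi n \<Phi> (x,y) \<le> 1"
proof -
  let ?P = "proj n x" and ?d = "2^n::nat"
  have cM: "\<Phi> ?P \<in> carrier_mat ?d ?d" using channel_carrier[OF ch] by simp
  have "psd (1*?d) (ampl ?d 1 \<Phi> ?P)" using channel_cp[OF ch, of 1] psd_proj[OF x] by simp
  then have psM: "psd ?d (\<Phi> ?P)" using ampl_one[where X="proj n x" and d="2^n" and \<Phi>=\<Phi>, OF proj_carrier cM] by simp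
  have diag: "Re (\<Phi> ?P $$ (i,i)) \<ge> 0" if i: "i < ?d" for i
    using psM[unfolded psd_def, THEN conjunct2, THEN conjunct2, THEN spec[where x = "\<lambda>k. if k = i then 1 else 0"], THEN conjunct2]
      qf_delta[OF i, of "\<Phi> ?P"] by simp
  have "mtrace ?P = (\<Sum>i<?d. if i = x then 1 else 0)"
    unfolding mtrace_def by (intro sum.cong) (auto simp: proj_def)
  then have tr1: "mtrace ?P = 1" using x by simp
  have "mtrace (\<Phi> ?P) = (\<Sum>i<?d. \<Phi> ?P $$ (i,i))" using cM by (simp add: mtrace_def)
  then have "(\<Sum>i<?d. Re (\<Phi> ?P $$ (i,i))) = Re (mtrace (\<Phi> ?P))" by (simp add: Re_sum)
  also have "\<dots> = 1" using channel_trace[OF ch proj_carrier] tr1 by simp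
  finally have "(\<Sum>i<?d. Re (\<Phi> ?P $$ (i,i))) = 1" .
  then have "Re (\<Phi> ?P $$ (y,y)) \<le> 1"
    using member_le_sum[of y "{..<?d}" "\<lambda>i. Re (\<Phi> ?P $$ (i,i))"] diag y by simp
  then show ?thesis using fPhi_eq[where \<Phi>=\<Phi> and n=n and x=x and y=y, OF cM y] diag[OF y] by simp
qed


definition Tsup :: "nat \<Rightarrow> (nat \<Rightarrow> 'z) \<Rightarrow> ('z \<Rightarrow> real) set \<Rightarrow> (nat \<Rightarrow> real) \<Rightarrow> real" where
  "Tsup m z G w = (SUP h\<in>G. \<bar>\<Sum>i<m. w i * h (z i)\<bar> / real m)"

lemma term_bound: fixes x :: "nat \<Rightarrow> real" and B :: real and h :: "'z \<Rightarrow> real"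
  assumes "\<forall>i<m. \<bar>h (z i)\<bar> \<le> B"
  shows "\<bar>\<Sum>i<m. x i * h (z i)\<bar> \<le> B * (\<Sum>i<m. \<bar>x i\<bar>)"
proof -
  have "\<bar>\<Sum>i<m. x i * h (z i)\<bar> \<le> (\<Sum>i<m. \<bar>x i * h (z i)\<bar>)" by simp
  also have "\<dots> \<le> (\<Sum>i<m. \<bar>x i\<bar> * B)"
  proof (rule sum_mono)
    fix i assume "i \<in> {..<m}"
    then have "\<bar>h (z i)\<bar> \<le> B" using assms by auto
    then show "\<bar>x i * h (z i)\<bar> \<le> \<bar>x i\<bar> * B" by (simp add: abs_mult mult_left_mono)
  qed
  finally show ?thesis by (simp add: sum_distrib_left mult.commute)
qed

lemma Tsup_bdd: fixes x :: "nat \<Rightarrow> real" and B :: real and G :: "('z \<Rightarrow> real) set"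
  assumes "\<forall>h\<in>G. \<forall>i<m. \<bar>h (z i)\<bar> \<le> B"
  shows "bdd_above ((\<lambda>h. \<bar>\<Sum>i<m. x i * h (z i)\<bar> / real m) ` G)"
proof (rule bdd_aboveI2)
  fix h assume "h \<in> G"
  then have "\<bar>\<Sum>i<m. x i * h (z i)\<bar> \<le> B * (\<Sum>i<m. \<bar>x i\<bar>)" using assms term_bound by blast
  then show "\<bar>\<Sum>i<m. x i * h (z i)\<bar> / real m \<le> B * (\<Sum>i<m. \<bar>x i\<bar>) / real m"
    by (simp add: divide_right_mono)
qed

lemma Tsup_nonneg: fixes x :: "nat \<Rightarrow> real" and G :: "('z \<Rightarrow> real) set"
  assumes "G \<noteq> {}" "bdd_above ((\<lambda>h. \<bar>\<Sum>i<m. x i * h (z i)\<bar> / real m) ` G)"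
  shows "0 \<le> Tsup m z G x"
proof -
  obtain h where h: "h \<in> G" using assms(1) by blast
  have "0 \<le> \<bar>\<Sum>i<m. x i * h (z i)\<bar> / real m" by simp
  also have "\<dots> \<le> Tsup m z G x" unfolding Tsup_def using h assms(2) by (rule cSUP_upper)
  finally show ?thesis .
qed

lemma tri_bound: fixes c a b K K' :: real
  assumes "\<bar>a\<bar> \<le> K" "\<bar>b\<bar> \<le> K'" shows "\<bar>c * a + b\<bar> \<le> \<bar>c\<bar> * K + K'"
proof -
  have "\<bar>c * a + b\<bar> \<le> \<bar>c\<bar> * \<bar>a\<bar> + \<bar>b\<bar>" using abs_triangle_ineq[of "c*a" b] by (simp add: abs_mult)
  moreover have "\<bar>c\<bar> * \<bar>a\<bar> \<le> \<bar>c\<bar> * K" using assms(1) by (simp add: mult_left_mono)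
  ultimately show ?thesis using assms(2) by linarith
qed

lemma lin_comb_bound:
  "(\<forall>i<m. F i = sum_list (map (\<lambda>(c,B). c * f B i) L)) \<Longrightarrow>
   (\<forall>p\<in>set L. \<bar>\<Sum>i<m. w i * f (snd p) i\<bar> \<le> K) \<Longrightarrow>
   \<bar>\<Sum>i<m. w i * F i\<bar> \<le> wt L * K"
proof (induction L arbitrary: F)
  case Nil then show ?case by simp
next
  case (Cons p L)
  obtain c B where p: "p = (c,B)" by fastforce
  define F' where "F' i = sum_list (map (\<lambda>(c,B). c * f B i) L)" for i
  have IH: "\<bar>\<Sum>i<m. w i * F' i\<bar> \<le> wt L * K" using Cons.IH[of F'] Cons.prems(2) unfolding F'_def by simp
  have "(\<Sum>i<m. w i * F i) = c * (\<Sum>i<m. w i * f B i) + (\<Sum>i<m. w i * F' i)"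
    using Cons.prems(1) by (simp add: p F'_def sum_distrib_left sum.distrib algebra_simps)
  moreover have "\<bar>\<Sum>i<m. w i * f B i\<bar> \<le> K" using Cons.prems(2) by (auto simp: p)
  ultimately have "\<bar>\<Sum>i<m. w i * F i\<bar> \<le> \<bar>c\<bar> * K + wt L * K"
    using IH tri_bound by presburger
  then show ?case by (simp add: p algebra_simps)
qed

lemma sumlist_bound: "(\<forall>p\<in>set L. \<bar>f (snd p)\<bar> \<le> K) \<Longrightarrow> \<bar>sum_list (map (\<lambda>(c,B). c * f B) L)\<bar> \<le> wt L * K"
proof (induction L)
  case Nil then show ?case by simp
next
  case (Cons p L)
  obtain c B where p: "p = (c,B)" by fastforce
  have "\<bar>f B\<bar> \<le> K" "\<bar>sum_list (map (\<lambda>(c,B). c * f B) L)\<bar> \<le> wt L * K" using Cons by (auto simp: p)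
  then have "\<bar>c * f B + sum_list (map (\<lambda>(c,B). c * f B) L)\<bar> \<le> \<bar>c\<bar> * K + wt L * K"
    using tri_bound by blast
  then show ?case by (simp add: p algebra_simps)
qed

lemma Tsup_integrable:
  fixes G :: "('z \<Rightarrow> real) set"
  assumes ne: "G \<noteq> {}" and bd: "\<forall>h\<in>G. \<forall>i<m. \<bar>h (z i)\<bar> \<le> B"
  shows "integrable (PiM {..<m} (\<lambda>_. density lborel std_normal_density)) (\<lambda>g. Tsup m z G g)"
proof -
  let ?N = "density lborel std_normal_density"
  let ?M = "PiM {..<m} (\<lambda>_. ?N)"
  have sN: "sets ?N = sets borel" by simp
  have pN: "prob_space ?N" by (rule prob_space_normal_density) simp
  have comp: "(\<lambda>g. g i) \<in> borel_measurable ?M" if "i < m" for i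
    using measurable_component_singleton[of i "{..<m}" "\<lambda>_. ?N"] that measurable_cong_sets[OF refl sN] by simp
  define E where "E g = (\<lambda>i. if i < m then g i else (0::real))" for g :: "nat \<Rightarrow> real"
  have Em: "E \<in> borel_measurable ?M"
  proof (rule measurable_coordinatewise_then_product)
    fix i show "(\<lambda>g. E g i) \<in> borel_measurable ?M"
      by (cases "i < m") (auto simp: E_def comp)
  qed
  define H where "H x = (SUP h\<in>G. \<bar>\<Sum>i<m. x i * h (z i)\<bar> / real m)" for x :: "nat \<Rightarrow> real"
  have Hm: "H \<in> borel_measurable borel"
  proof (rule borel_measurableI_greater)
    fix y :: real
    have "{x \<in> space borel. y < H x} = (\<Union>h\<in>G. {x. y < \<bar>\<Sum>i<m. x i * h (z i)\<bar> / real m})"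
      unfolding H_def using less_cSUP_iff[OF ne Tsup_bdd[OF bd]] by auto
    also have "open \<dots>"
    proof (rule open_UN, rule ballI)
      fix h assume "h \<in> G"
      show "open {x::nat\<Rightarrow>real. y < \<bar>\<Sum>i<m. x i * h (z i)\<bar> / real m}"
        unfolding divide_inverse
        by (rule open_Collect_less, intro continuous_intros, rule continuous_on_mult_right)
           (intro continuous_intros continuous_on_product_coordinates)+
    qed
    finally show "{x \<in> space borel. y < H x} \<in> sets borel" by simp
  qed
  have eq: "Tsup m z G g = H (E g)" for g
    unfolding Tsup_def H_def E_def by (intro SUP_cong refl) (auto intro!: sum.cong)
  have meas: "(\<lambda>g. Tsup m z G g) \<in> borel_measurable ?M"
    unfolding eq using measurable_comp[OF Em Hm] by (simp add: o_def)
  have intabs: "integrable ?M (\<lambda>g. \<bar>g i\<bar>)" if i: "i < m" for i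
  proof -
    have "integrable lborel (\<lambda>x. std_normal_density x * \<bar>x\<bar>^1)" by (rule integrable_std_normal_moment_abs)
    then have "integrable ?N (\<lambda>x. \<bar>x\<bar>::real)"
      by (subst integrable_density) auto
    then have "integrable (distr ?M ?N (\<lambda>g. g i)) (\<lambda>x. \<bar>x\<bar>::real)"
      using distr_PiM_component[of "{..<m}" "\<lambda>_. ?N" i] pN i by simp
    then show ?thesis
      using measurable_component_singleton[of i "{..<m}" "\<lambda>_. ?N"] i
      by (subst (asm) integrable_distr_eq) auto
  qed
  have ib: "integrable ?M (\<lambda>g. B * (\<Sum>i<m. \<bar>g i\<bar>) / real m)"
    using intabs by (intro integrable_divide integrable_mult_right integrable_sum) auto
  show ?thesis
  proof (rule Bochner_Integration.integrable_bound[OF ib meas])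
    show "AE g in ?M. norm (Tsup m z G g) \<le> norm (B * (\<Sum>i<m. \<bar>g i\<bar>) / real m)"
    proof (rule AE_I2)
      fix g
      have "Tsup m z G g \<le> B * (\<Sum>i<m. \<bar>g i\<bar>) / real m"
        unfolding Tsup_def
      proof (rule cSUP_least[OF ne])
        fix h assume "h \<in> G"
        then have "\<bar>\<Sum>i<m. g i * h (z i)\<bar> \<le> B * (\<Sum>i<m. \<bar>g i\<bar>)" using bd term_bound by blast
        then show "\<bar>\<Sum>i<m. g i * h (z i)\<bar> / real m \<le> B * (\<Sum>i<m. \<bar>g i\<bar>) / real m"
          by (simp add: divide_right_mono)
      qed
      moreover have "0 \<le> Tsup m z G g" using Tsup_nonneg[OF ne Tsup_bdd[OF bd]] .
      moreover have "B * (\<Sum>i<m. \<bar>g i\<bar>) / real m \<le> \<bar>B * (\<Sum>i<m. \<bar>g i\<bar>)\<bar> / real m"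
        by (rule divide_right_mono) auto
      ultimately show "norm (Tsup m z G g) \<le> norm (B * (\<Sum>i<m. \<bar>g i\<bar>) / real m)" by simp
    qed
  qed
qed


lemma Ok_Rep:
  assumes Ob: "\<forall>\<Phi>\<in>Ob. channel n \<Phi>" and cl: "\<forall>\<Phi>\<in>Ob. \<forall>\<Phi>'\<in>Ob. \<Phi> \<circ> \<Phi>' \<in> Ob"
    and ch: "channel n \<Psi>" and P: "Rep n Ob \<Psi> s" and s: "s \<ge> 1" and C: "C \<in> Ok Ob \<Psi> k"
  shows "Rep n Ob C (s^k)"
proof -
  obtain xs where xs: "C = compose_seq \<Psi> xs" "xs \<noteq> []" "\<forall>a\<in>set xs. a = None \<or> the a \<in> Ob"
    "length (filter (\<lambda>a. a = None) xs) \<le> k"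
    using C unfolding Ok_def by blast
  have "Rep n Ob C (s ^ length (filter (\<lambda>a. a = None) xs))"
    using Rep_seq[OF Ob cl ch P xs(2,3)] xs(1) by simp
  moreover have "s ^ length (filter (\<lambda>a. a = None) xs) \<le> s^k"
    using xs(4) s by (rule power_increasing)
  ultimately show ?thesis by (rule Rep_mono)
qed

lemma Ok_channel:
  assumes Ob: "\<forall>\<Phi>\<in>Ob. channel n \<Phi>" and ch: "channel n \<Psi>" and C: "C \<in> Ok Ob \<Psi> k"
  shows "channel n C"
proof -
  obtain xs where xs: "C = compose_seq \<Psi> xs" "xs \<noteq> []" "\<forall>a\<in>set xs. a = None \<or> the a \<in> Ob"
    using C unfolding Ok_def by blast
  then show ?thesis using channel_seq[OF Ob ch xs(2,3)] by simp
qed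

lemma Ob_Ok: "Ob \<subseteq> Ok Ob \<Psi> k"
proof
  fix \<Phi> assume "\<Phi> \<in> Ob"
  moreover have "compose_seq \<Psi> [Some \<Phi>] = \<Phi>" by (simp add: compose_seq_def)
  ultimately show "\<Phi> \<in> Ok Ob \<Psi> k" unfolding Ok_def
    by (intro CollectI exI[of _ "[Some \<Phi>]"]) auto
qed

lemma Fset_bound1:
  assumes Ob: "\<forall>\<Phi>\<in>Ob. channel n \<Phi>" and zv: "\<forall>i<m. fst (z i) < 2^n \<and> snd (z i) < 2^n"
  shows "\<forall>h\<in>Fset n Ob. \<forall>i<m. \<bar>h (z i)\<bar> \<le> 1"
proof (intro ballI allI impI)
  fix h i assume h: "h \<in> Fset n Ob" and i: "i < m"
  obtain B where B: "B \<in> Ob" "h = fPhi n B" using h unfolding Fset_def by blast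
  have "0 \<le> fPhi n B (fst (z i), snd (z i)) \<and> fPhi n B (fst (z i), snd (z i)) \<le> 1"
    using channel_fPhi_bound[of n B "fst (z i)" "snd (z i)"] Ob B(1) zv i by blast
  then show "\<bar>h (z i)\<bar> \<le> 1" using B(2) by simp
qed

lemma Rep_Tsup:
  assumes ne: "Ob \<noteq> {}" and Ob: "\<forall>\<Phi>\<in>Ob. channel n \<Phi>"
    and zv: "\<forall>i<m. fst (z i) < 2^n \<and> snd (z i) < 2^n" and R: "Rep n Ob C t"
  shows "\<bar>\<Sum>i<m. w i * fPhi n C (z i)\<bar> / real m \<le> t * Tsup m z (Fset n Ob) w"
proof -
  obtain L where L: "set (map snd L) \<subseteq> Ob" "MC (2^n) L" "wt L \<le> t"
      "\<forall>X\<in>carrier_mat (2^n) (2^n). C X = lc (2^n) L X"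
    using R unfolding Rep_def by (elim exE conjE) (rule that; assumption)
  let ?T = "Tsup m z (Fset n Ob) w"
  have neF: "Fset n Ob \<noteq> {}" using ne by (simp add: Fset_def)
  have bdd: "bdd_above ((\<lambda>h. \<bar>\<Sum>i<m. w i * h (z i)\<bar> / real m) ` Fset n Ob)"
    by (rule Tsup_bdd[OF Fset_bound1[OF Ob zv]])
  have T0: "0 \<le> ?T" by (rule Tsup_nonneg[OF neF bdd])
  have K: "\<bar>\<Sum>i<m. w i * fPhi n (snd p) (z i)\<bar> \<le> real m * ?T" if p: "p \<in> set L" for p
  proof -
    have "snd p \<in> Ob" using L(1) p by auto
    then have "fPhi n (snd p) \<in> Fset n Ob" by (simp add: Fset_def)
    then have le: "\<bar>\<Sum>i<m. w i * fPhi n (snd p) (z i)\<bar> / real m \<le> ?T"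
      unfolding Tsup_def using bdd by (rule cSUP_upper)
    show ?thesis
    proof (cases "m = 0")
      case True then show ?thesis by simp
    next
      case False then show ?thesis using le by (simp add: field_simps)
    qed
  qed
  have F: "\<forall>i<m. fPhi n C (z i) = sum_list (map (\<lambda>(c,B). c * fPhi n B (z i)) L)"
  proof (intro allI impI)
    fix i assume i: "i < m"
    have "fPhi n C (fst (z i), snd (z i)) = sum_list (map (\<lambda>(c,B). c * fPhi n B (fst (z i), snd (z i))) L)"
      using fPhi_lc[OF L(2) L(4)] zv i by blast
    then show "fPhi n C (z i) = sum_list (map (\<lambda>(c,B). c * fPhi n B (z i)) L)" by simp
  qed
  have "\<bar>\<Sum>i<m. w i * fPhi n C (z i)\<bar> \<le> wt L * (real m * ?T)"
    using lin_comb_bound[where F="\<lambda>i. fPhi n C (z i)" and f="\<lambda>B i. fPhi n B (z i)" and L=L and m=m and w=w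
        and K="real m * ?T"] F K by blast
  then have "\<bar>\<Sum>i<m. w i * fPhi n C (z i)\<bar> / real m \<le> wt L * ?T"
    using T0 wt_nonneg[of L] by (cases "m = 0") (auto simp: field_simps)
  also have "\<dots> \<le> t * ?T" using L(3) T0 by (rule mult_right_mono)
  finally show ?thesis .
qed

lemma Tsup_Ok_le:
  assumes ne: "Ob \<noteq> {}" and Ob: "\<forall>\<Phi>\<in>Ob. channel n \<Phi>"
    and zv: "\<forall>i<m. fst (z i) < 2^n \<and> snd (z i) < 2^n" and R: "\<forall>C\<in>Ok Ob \<Psi> k. Rep n Ob C t"
  shows "Tsup m z (Fset n (Ok Ob \<Psi> k)) w \<le> t * Tsup m z (Fset n Ob) w"
    and "bdd_above ((\<lambda>h. \<bar>\<Sum>i<m. w i * h (z i)\<bar> / real m) ` Fset n (Ok Ob \<Psi> k))"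
proof -
  have neF: "Fset n (Ok Ob \<Psi> k) \<noteq> {}" using ne Ob_Ok[of Ob \<Psi> k] by (auto simp: Fset_def)
  have le: "\<bar>\<Sum>i<m. w i * h (z i)\<bar> / real m \<le> t * Tsup m z (Fset n Ob) w" if h: "h \<in> Fset n (Ok Ob \<Psi> k)" for h
  proof -
    obtain C where C: "C \<in> Ok Ob \<Psi> k" "h = fPhi n C" using h unfolding Fset_def by blast
    show ?thesis using Rep_Tsup[OF ne Ob zv R[rule_format, OF C(1)]] C(2) by simp
  qed
  show "Tsup m z (Fset n (Ok Ob \<Psi> k)) w \<le> t * Tsup m z (Fset n Ob) w"
    unfolding Tsup_def[of m z "Fset n (Ok Ob \<Psi> k)"] using le by (intro cSUP_least[OF neF]) auto
  show "bdd_above ((\<lambda>h. \<bar>\<Sum>i<m. w i * h (z i)\<bar> / real m) ` Fset n (Ok Ob \<Psi> k))"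
    using le by (intro bdd_aboveI2) auto
qed

lemma Fset_Ok_bound:
  assumes Ob: "\<forall>\<Phi>\<in>Ob. channel n \<Phi>"
    and zv: "\<forall>i<m. fst (z i) < 2^n \<and> snd (z i) < 2^n" and R: "\<forall>C\<in>Ok Ob \<Psi> k. Rep n Ob C t"
  shows "\<forall>h\<in>Fset n (Ok Ob \<Psi> k). \<forall>i<m. \<bar>h (z i)\<bar> \<le> t"
proof (intro ballI allI impI)
  fix h i assume h: "h \<in> Fset n (Ok Ob \<Psi> k)" and i: "i < m"
  obtain C where C: "C \<in> Ok Ob \<Psi> k" "h = fPhi n C" using h unfolding Fset_def by blast
  obtain L where L: "set (map snd L) \<subseteq> Ob" "MC (2^n) L" "wt L \<le> t"
      "\<forall>X\<in>carrier_mat (2^n) (2^n). C X = lc (2^n) L X"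
    using R C(1) unfolding Rep_def by blast
  have e: "fPhi n C (fst (z i), snd (z i)) = sum_list (map (\<lambda>(c,B). c * fPhi n B (fst (z i), snd (z i))) L)"
    using fPhi_lc[OF L(2) L(4)] zv i by blast
  have "\<forall>p\<in>set L. \<bar>fPhi n (snd p) (fst (z i), snd (z i))\<bar> \<le> 1"
  proof
    fix p assume "p \<in> set L"
    then have "snd p \<in> Ob" using L(1) by auto
    then show "\<bar>fPhi n (snd p) (fst (z i), snd (z i))\<bar> \<le> 1"
      using channel_fPhi_bound[of n "snd p" "fst (z i)" "snd (z i)"] Ob zv i by auto
  qed
  then have "\<bar>fPhi n C (fst (z i), snd (z i))\<bar> \<le> wt L * 1"
    unfolding e by (rule sumlist_bound)
  then show "\<bar>h (z i)\<bar> \<le> t" using C(2) L(3) by simp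
qed


lemma rob_lt:
  assumes Ob: "\<forall>\<Phi>\<in>Ob. channel n \<Phi>" and ch: "channel n \<Phi>" and lt: "robustness n Ob \<Phi> < ereal r"
  shows "\<exists>l. 0 \<le> l \<and> l < r \<and> Rep n Ob \<Phi> (1 + 2*l)"
proof -
  obtain y where y: "y \<in> ereal ` {l. l \<ge> 0 \<and> (\<exists>\<Phi>'. in_conv n Ob \<Phi>' \<and>
      in_conv n Ob (\<lambda>X. complex_of_real (1 / (1 + l)) \<cdot>\<^sub>m (\<Phi> X + complex_of_real l \<cdot>\<^sub>m \<Phi>' X)))}" "y < ereal r"
    using lt unfolding robustness_def Inf_less_iff by blast
  from y(1) obtain l where lS: "l \<in> {l. l \<ge> 0 \<and> (\<exists>\<Phi>'. in_conv n Ob \<Phi>' \<and>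
      in_conv n Ob (\<lambda>X. complex_of_real (1 / (1 + l)) \<cdot>\<^sub>m (\<Phi> X + complex_of_real l \<cdot>\<^sub>m \<Phi>' X)))}"
    and yl: "y = ereal l" by (rule imageE)
  have l0: "l \<ge> 0" using lS unfolding mem_Collect_eq by (rule conjunct1)
  have ex: "\<exists>\<Phi>'. in_conv n Ob \<Phi>' \<and>
      in_conv n Ob (\<lambda>X. complex_of_real (1 / (1 + l)) \<cdot>\<^sub>m (\<Phi> X + complex_of_real l \<cdot>\<^sub>m \<Phi>' X))"
    using lS unfolding mem_Collect_eq by (rule conjunct2)
  have l: "l \<ge> 0" "l < r" using l0 y(2) yl by auto
  from ex obtain \<Phi>' where c: "in_conv n Ob \<Phi>'"
      "in_conv n Ob (\<lambda>X. complex_of_real (1 / (1 + l)) \<cdot>\<^sub>m (\<Phi> X + complex_of_real l \<cdot>\<^sub>m \<Phi>' X))"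
    by (elim exE conjE)
  show ?thesis using rob_rep[OF Ob ch l(1) c] l by blast
qed

lemma rob_nonneg: "0 \<le> robustness n Ob \<Phi>"
  unfolding robustness_def by (rule Inf_greatest) auto

lemma field_eps_bound:
  fixes x g r :: real
  assumes r: "0 \<le> r" and h: "\<And>t. g < t \<Longrightarrow> x \<le> t * r"
  shows "x \<le> g * r"
proof (rule field_le_epsilon)
  fix e :: real assume e: "0 < e"
  have "x \<le> (g + e / (r + 1)) * r" using h[of "g + e/(r+1)"] e r by simp
  also have "\<dots> = g * r + e * (r / (r + 1))" using r by (simp add: field_simps)
  also have "\<dots> \<le> g * r + e * 1"
    using r e by (intro add_left_mono mult_left_mono) auto
  finally show "x \<le> g * r + e" by simp
qed

lemma partA:
  assumes Ob: "\<forall>\<Phi>\<in>Ob. channel n \<Phi>" and cl: "\<forall>\<Phi>\<in>Ob. \<forall>\<Phi>'\<in>Ob. \<Phi> \<circ> \<Phi>' \<in> Ob"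
    and ch: "channel n \<Psi>" and g0: "robustness n Ob \<Psi> = ereal \<gamma>0" and t: "(1 + 2*\<gamma>0)^k < t"
  shows "\<forall>C\<in>Ok Ob \<Psi> k. Rep n Ob C t"
proof
  fix C assume C: "C \<in> Ok Ob \<Psi> k"
  have gp: "0 \<le> \<gamma>0" using rob_nonneg[of n Ob \<Psi>] g0 by simp
  show "Rep n Ob C t"
  proof (cases "k = 0")
    case True
    obtain l where l: "0 \<le> l" "Rep n Ob \<Psi> (1 + 2*l)"
      using rob_lt[OF Ob ch, of "\<gamma>0 + 1"] g0 by auto
    have "Rep n Ob C ((1+2*l)^k)" using Ok_Rep[OF Ob cl ch l(2) _ C] l(1) by simp
    then show ?thesis using True t by (auto intro: Rep_mono)
  next
    case False
    then have kp: "0 < k" by simp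
    have t0: "0 \<le> t" using t gp by (smt (verit) zero_le_power)
    define s where "s = root k t"
    have s0: "0 \<le> s" using t0 unfolding s_def by (rule real_root_ge_zero)
    have sk: "s ^ k = t" using kp t0 by (simp add: s_def real_root_pow_pos2)
    have "1 + 2*\<gamma>0 < s" using power_less_imp_less_base[of "1 + 2*\<gamma>0" k s] t sk s0 by simp
    then have "robustness n Ob \<Psi> < ereal ((s - 1) / 2)" using g0 by simp
    then obtain l where l: "0 \<le> l" "l < (s - 1)/2" "Rep n Ob \<Psi> (1 + 2*l)"
      using rob_lt[OF Ob ch] by blast
    have "Rep n Ob C ((1+2*l)^k)" using Ok_Rep[OF Ob cl ch l(3) _ C] l(1) by simp
    moreover have "(1+2*l)^k \<le> s^k" using l(1,2) by (intro power_mono) auto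
    ultimately show ?thesis using sk by (auto intro: Rep_mono)
  qed
qed

lemma partB:
  assumes Ob: "\<forall>\<Phi>\<in>Ob. channel n \<Phi>" and ch: "channel n \<Psi>"
    and b: "robustness_max n Ob = ereal b" and t: "1 + 2*b < t"
  shows "\<forall>C\<in>Ok Ob \<Psi> k. Rep n Ob C t"
proof
  fix C assume C: "C \<in> Ok Ob \<Psi> k"
  have chC: "channel n C" by (rule Ok_channel[OF Ob ch C])
  have "robustness n Ob C \<le> robustness_max n Ob"
    unfolding robustness_max_def using chC by (intro SUP_upper) auto
  also have "\<dots> < ereal ((t - 1)/2)" using b t by simp
  finally obtain l where l: "0 \<le> l" "l < (t - 1)/2" "Rep n Ob C (1 + 2*l)"
    using rob_lt[OF Ob chC] by blast
  then show "Rep n Ob C t" by (auto intro: Rep_mono)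
qed


lemma rad_eq: "rademacher m z G = (\<Sum>e\<in>signs m. Tsup m z G e) / 2 ^ m"
  by (simp add: rademacher_def Tsup_def)

lemma gauss_eq: "gaussian m z G = (\<integral>g. Tsup m z G g \<partial>(PiM {..<m} (\<lambda>_. density lborel std_normal_density)))"
  by (simp add: gaussian_def Tsup_def)

theorem mainTheorem12:
  fixes n k m :: nat and Ob :: "qmap set" and \<Psi> :: qmap and z :: "nat \<Rightarrow> nat \<times> nat"
  assumes "Ob \<noteq> {}"
    and "\<forall>\<Phi>\<in>Ob. channel n \<Phi>"
    and "\<forall>\<Phi>\<in>Ob. \<forall>\<Phi>'\<in>Ob. \<Phi> \<circ> \<Phi>' \<in> Ob"
    and "channel n \<Psi>"
    and "robustness n Ob \<Psi> < \<infinity>"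
    and "\<forall>i<m. fst (z i) < 2^n \<and> snd (z i) < 2^n"
  shows "rademacher m z (Fset n Ob) \<le> rademacher m z (Fset n (Ok Ob \<Psi> k))
       \<and> ereal (rademacher m z (Fset n (Ok Ob \<Psi> k)))
           \<le> gamma_star n Ob \<Psi> k * ereal (rademacher m z (Fset n Ob))
       \<and> gaussian m z (Fset n Ob) \<le> gaussian m z (Fset n (Ok Ob \<Psi> k))
       \<and> ereal (gaussian m z (Fset n (Ok Ob \<Psi> k)))
           \<le> gamma_star n Ob \<Psi> k * ereal (gaussian m z (Fset n Ob))"
proof -
  note ne = assms(1) and Ob = assms(2) and cl = assms(3) and ch = assms(4) and zv = assms(6)
  let ?M = "PiM {..<m} (\<lambda>_. density lborel std_normal_density)"
  let ?FO = "Fset n Ob" and ?FK = "Fset n (Ok Ob \<Psi> k)"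
  obtain \<gamma>0 where g0: "robustness n Ob \<Psi> = ereal \<gamma>0"
    using rob_nonneg[of n Ob \<Psi>] assms(5) by (cases "robustness n Ob \<Psi>") auto
  have gp: "0 \<le> \<gamma>0" using rob_nonneg[of n Ob \<Psi>] g0 by simp
  obtain l0 where l0: "0 \<le> l0" "Rep n Ob \<Psi> (1 + 2*l0)"
    using rob_lt[OF Ob ch, of "\<gamma>0 + 1"] g0 by auto
  define t0 where "t0 = (1 + 2*l0)^k"
  have R0: "\<forall>C\<in>Ok Ob \<Psi> k. Rep n Ob C t0"
    unfolding t0_def using Ok_Rep[OF Ob cl ch l0(2)] l0(1) by auto
  have neF: "?FO \<noteq> {}" using ne by (simp add: Fset_def)
  have bdO: "bdd_above ((\<lambda>h. \<bar>\<Sum>i<m. w i * h (z i)\<bar> / real m) ` ?FO)" for w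
    by (rule Tsup_bdd[OF Fset_bound1[OF Ob zv]])
  have TO0: "0 \<le> Tsup m z ?FO w" for w by (rule Tsup_nonneg[OF neF bdO])
  have sub: "?FO \<subseteq> ?FK" unfolding Fset_def using Ob_Ok by (rule image_mono)
  have TKge: "Tsup m z ?FO w \<le> Tsup m z ?FK w" for w
    unfolding Tsup_def by (rule cSUP_subset_mono[OF neF Tsup_Ok_le(2)[OF ne Ob zv R0] sub]) simp
  have intO: "integrable ?M (\<lambda>g. Tsup m z ?FO g)"
    by (rule Tsup_integrable[OF neF Fset_bound1[OF Ob zv]])
  have intK: "integrable ?M (\<lambda>g. Tsup m z ?FK g)"
    using neF sub by (intro Tsup_integrable[OF _ Fset_Ok_bound[OF Ob zv R0]]) auto
  have TK0: "0 \<le> Tsup m z ?FK w" for w using TO0[of w] TKge[of w] by linarith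
  have L1: "rademacher m z ?FO \<le> rademacher m z ?FK"
    unfolding rad_eq by (intro divide_right_mono sum_mono TKge) simp
  have L2: "gaussian m z ?FO \<le> gaussian m z ?FK"
    unfolding gauss_eq by (rule integral_mono'[OF intK]) (auto intro: TKge TK0)
  have U: "rademacher m z ?FK \<le> t * rademacher m z ?FO \<and> gaussian m z ?FK \<le> t * gaussian m z ?FO"
    if R: "\<forall>C\<in>Ok Ob \<Psi> k. Rep n Ob C t" for t
  proof -
    have le: "Tsup m z ?FK w \<le> t * Tsup m z ?FO w" for w by (rule Tsup_Ok_le(1)[OF ne Ob zv R])
    have tnn: "0 \<le> t"
    proof -
      obtain \<Phi> where "\<Phi> \<in> Ob" using ne by blast
      then have "\<Phi> \<in> Ok Ob \<Psi> k" using Ob_Ok by blast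
      then obtain L where "wt L \<le> t" using R unfolding Rep_def by blast
      then show ?thesis using wt_nonneg[of L] by linarith
    qed
    have "rademacher m z ?FK \<le> (\<Sum>e\<in>signs m. t * Tsup m z ?FO e) / 2 ^ m"
      unfolding rad_eq by (intro divide_right_mono sum_mono le) simp
    also have "\<dots> = t * rademacher m z ?FO" unfolding rad_eq by (simp add: sum_distrib_left)
    finally have r1: "rademacher m z ?FK \<le> t * rademacher m z ?FO" .
    have "gaussian m z ?FK \<le> (\<integral>g. t * Tsup m z ?FO g \<partial>?M)"
      unfolding gauss_eq
      by (rule integral_mono'[OF integrable_mult_right[OF intO]]) (auto intro: le mult_nonneg_nonneg[OF tnn TO0])
    also have "\<dots> = t * gaussian m z ?FO" unfolding gauss_eq by simp
    finally show ?thesis using r1 by simp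
  qed
  have rm0: "robustness n Ob \<Psi> \<le> robustness_max n Ob"
    unfolding robustness_max_def using ch by (intro SUP_upper) auto
  obtain g where gs: "gamma_star n Ob \<Psi> k = ereal g"
    and adm: "\<And>t. g < t \<Longrightarrow> \<forall>C\<in>Ok Ob \<Psi> k. Rep n Ob C t"
  proof (cases "robustness_max n Ob")
    case (real b)
    have e: "gamma_star n Ob \<Psi> k = ereal (min ((1 + 2*\<gamma>0)^k) (1 + 2*b))"
      unfolding gamma_star_def g0 real by (simp add: ereal_power[symmetric] add.commute del: ereal_power)
    show ?thesis
    proof (rule that[OF e])
      fix t assume "min ((1 + 2*\<gamma>0)^k) (1 + 2*b) < t"
      then consider "(1 + 2*\<gamma>0)^k < t" | "1 + 2*b < t" by linarith
      then show "\<forall>C\<in>Ok Ob \<Psi> k. Rep n Ob C t"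
      proof cases
        case 1 then show ?thesis by (rule partA[OF Ob cl ch g0])
      next
        case 2 then show ?thesis by (rule partB[OF Ob ch real])
      qed
    qed
  next
    case PInf
    have e: "gamma_star n Ob \<Psi> k = ereal ((1 + 2*\<gamma>0)^k)"
      unfolding gamma_star_def g0 PInf by (simp add: ereal_power[symmetric] add.commute del: ereal_power)
    show ?thesis
      by (rule that[OF e]) (rule partA[OF Ob cl ch g0])
  next
    case MInf
    then show ?thesis using rm0 g0 by simp
  qed
  have r0: "0 \<le> rademacher m z ?FO" unfolding rad_eq by (intro divide_nonneg_nonneg sum_nonneg TO0) simp
  have q0: "0 \<le> gaussian m z ?FO" unfolding gauss_eq by (rule integral_nonneg_AE[OF AE_I2[OF TO0]])
  have R1: "rademacher m z ?FK \<le> g * rademacher m z ?FO"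
  proof (rule field_eps_bound[OF r0])
    fix t assume "g < t"
    show "rademacher m z ?FK \<le> t * rademacher m z ?FO" using U[OF adm[OF \<open>g < t\<close>]] by (rule conjunct1)
  qed
  have G1: "gaussian m z ?FK \<le> g * gaussian m z ?FO"
  proof (rule field_eps_bound[OF q0])
    fix t assume "g < t"
    show "gaussian m z ?FK \<le> t * gaussian m z ?FO" using U[OF adm[OF \<open>g < t\<close>]] by (rule conjunct2)
  qed
  show ?thesis using L1 L2 R1 G1 gs by simp
qed

end
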